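(* Let $p$ be a prime and let $G$ be a nontrivial finite $p$-group. Then there exists an element $z\in G$ of order $p$ such that $|I_{\mathcal C}(z)|=n_G$.
   Context: For a finite group $G$ and $x\in G$, let $I_{\mathcal C}(x)=\{y\in G : \langle x,y\rangle \text{ is cyclic}\}$. For a nontrivial finite group $G$, $n_G=\max\{|I_{\mathcal C}(x)| : x\in G\setminus\{1\}\}$. *)

theory Defs
  imports "HOL-Algebra.Algebra"
begin

definition I_C :: "('a, 'b) monoid_scheme \<Rightarrow> 'a \<Rightarrow> 'a set" where
  "I_C G x = {y \<in> carrier G. cyclic_group (subgroup_generated G {x, y})}"

definition n_G :: "('a, 'b) monoid_scheme \<Rightarrow> nat" where
  "n_G G = Max ((\<lambda>x. card (I_C G x)) ` (carrier G - {\<one>\<^bsub>G\<^esub>}))"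

end

theory Submission
  imports Defs
begin

lemma (in group) sub_of_powers_cyclic:
  assumes fin: "finite (carrier G)" and g: "g \<in> carrier G" and H: "subgroup H G"
    and sub: "H \<subseteq> range (\<lambda>n::int. g [^] n)"
  shows "\<exists>h\<in>H. H = range (\<lambda>n::int. h [^] n)"
proof -
  define S where "S = {n::nat. 0 < n \<and> g [^] n \<in> H}"
  have og: "ord g > 0" using ord_ge_1[OF fin g] by simp
  have "g [^] ord g \<in> H" using g H subgroup.one_closed by (simp add: pow_ord_eq_1)
  hence "ord g \<in> S" using og S_def by auto
  define d where "d = (LEAST n. n \<in> S)"
  have dS: "d \<in> S" unfolding d_def by (rule LeastI) fact
  have dmin: "\<And>m. m \<in> S \<Longrightarrow> d \<le> m" unfolding d_def by (rule Least_le)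
  define h where "h = g [^] d"
  have hH: "h \<in> H" using dS S_def h_def by auto
  have hG: "h \<in> carrier G" using h_def g by simp
  have hint: "h = g [^] (int d)" using h_def g by (simp add: int_pow_int)
  have "H = range (\<lambda>n::int. h [^] n)"
  proof
    show "range (\<lambda>n::int. h [^] n) \<subseteq> H"
      using subgroup_int_pow_closed[OF H hH] by blast
  next
    show "H \<subseteq> range (\<lambda>n::int. h [^] n)"
    proof
      fix a assume aH: "a \<in> H"
      then obtain i :: int where ai: "a = g [^] i" using sub by blast
      define q where "q = i div int d"
      define r where "r = i mod int d"
      have d0: "d > 0" using dS S_def by auto
      have ieq: "i = int d * q + r" unfolding q_def r_def by simp
      have r0: "r \<ge> 0" "r < int d" using d0 unfolding r_def by auto
      have "a = h [^] q \<otimes> g [^] r"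
        using ai ieq hint g by (simp add: int_pow_mult int_pow_pow)
      moreover have aG: "a \<in> carrier G" by (rule subgroup.mem_carrier[OF H aH])
      ultimately have "g [^] r = inv (h [^] q) \<otimes> a"
        using inv_solve_left[of "g [^] r" "h [^] q" a] hG g by simp
      moreover have hq: "h [^] q \<in> H" by (rule subgroup_int_pow_closed[OF H hH])
      moreover have hi: "inv (h [^] q) \<in> H" by (rule subgroup.m_inv_closed[OF H hq])
      ultimately have grH: "g [^] r \<in> H" using subgroup.m_closed[OF H hi aH] by simp
      have "r = 0"
      proof (rule ccontr)
        assume "r \<noteq> 0"
        hence "nat r \<in> S" using r0 grH S_def g by (simp add: int_pow_int[symmetric])
        hence "d \<le> nat r" by (rule dmin)
        thus False using r0 by linarith
      qed
      hence "a = h [^] q" using ai ieq hint g by (simp add: int_pow_pow)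
      thus "a \<in> range (\<lambda>n::int. h [^] n)" by blast
    qed
  qed
  thus ?thesis using hH by blast
qed

lemma (in group) cyc_sub:
  assumes fin: "finite (carrier G)" and g: "g \<in> carrier G"
    and sub: "carrier (subgroup_generated G A) \<subseteq> range (\<lambda>n::int. g [^] n)"
  shows "cyclic_group (subgroup_generated G A)"
proof -
  let ?K = "subgroup_generated G A"
  obtain h where hH: "h \<in> carrier ?K" and eq: "carrier ?K = range (\<lambda>n::int. h [^] n)"
    using sub_of_powers_cyclic[OF fin g subgroup_subgroup_generated sub] by blast
  have "carrier ?K = range (\<lambda>n::int. h [^]\<^bsub>?K\<^esub> n)"
    using eq hH by (simp add: int_pow_subgroup_generated)
  thus ?thesis using hH group.cyclic_group[OF group_subgroup_generated] by blast
qed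

lemma (in group) main_aux:
  fixes p :: nat
  assumes "Factorial_Ring.prime p" and fin: "finite (carrier G)"
    and "\<exists>k. order G = p ^ k"
    and "carrier G \<noteq> {\<one>}"
  shows "\<exists>z \<in> carrier G. ord z = p \<and> card (I_C G z) = n_G G"
proof -
  let ?f = "\<lambda>x. card (I_C G x)"
  have ne: "carrier G - {\<one>} \<noteq> {}" using assms(4) by auto
  have "n_G G \<in> ?f ` (carrier G - {\<one>})"
    unfolding n_G_def using fin ne by (intro Max_in) auto
  then obtain x where xD: "x \<in> carrier G - {\<one>}" and xmax: "n_G G = ?f x"
    by blast
  have xG: "x \<in> carrier G" and x1: "x \<noteq> \<one>" using xD by auto
  obtain k where k: "order G = p ^ k" using assms(3) by blast
  have "ord x dvd p ^ k" using ord_dvd_group_order[OF xG] k by simp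
  then obtain i where i: "ord x = p ^ i" using assms(1) divides_primepow_nat by blast
  have "ord x \<noteq> 1" using x1 xG ord_eq_1 by blast
  hence "i \<noteq> 0" using i by auto
  hence pd: "p dvd ord x" using i by (simp add: dvd_power)
  have p0: "p > 1" using assms(1) prime_gt_1_nat by blast
  have og: "ord x > 0" using ord_ge_1[OF fin xG] by simp
  define m where "m = ord x div p"
  have om: "ord x = m * p" using pd unfolding m_def by simp
  have mdvd: "m dvd ord x" using om by simp
  have m0: "m \<noteq> 0" using om og by auto
  have odm: "ord x div m = p" using om m0 by simp
  define z where "z = x [^] m"
  have zG: "z \<in> carrier G" using z_def xG by simp
  have oz: "ord z = p"
    using ord_pow[OF xG mdvd m0] odm unfolding z_def by simp
  have z1: "z \<noteq> \<one>" using oz p0 ord_eq_1[OF zG] by auto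
  have sub: "I_C G x \<subseteq> I_C G z"
  proof
    fix y assume "y \<in> I_C G x"
    hence yG: "y \<in> carrier G" and cy: "cyclic_group (subgroup_generated G {x, y})"
      unfolding I_C_def by auto
    let ?K = "subgroup_generated G {x, y}"
    obtain g where gK: "g \<in> carrier ?K" and eqK: "carrier ?K = range (\<lambda>n::int. g [^]\<^bsub>?K\<^esub> n)"
      using cy group.cyclic_group[OF group_subgroup_generated] by blast
    have eqK2: "carrier ?K = range (\<lambda>n::int. g [^] n)"
      using eqK gK by (simp add: int_pow_subgroup_generated)
    have gG: "g \<in> carrier G" using gK carrier_subgroup_generated_subset by blast
    have xyK: "{x, y} \<subseteq> carrier ?K"
      using subgroup_generated_subset_carrier_subset[of "{x,y}"] xG yG by auto
    have zK: "z \<in> carrier ?K"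
    proof -
      have "x [^] (int m) \<in> carrier ?K"
        using subgroup_int_pow_closed[OF subgroup_subgroup_generated[of "{x,y}"]] xyK by auto
      thus ?thesis unfolding z_def using int_pow_int[of G x m] by simp
    qed
    have "carrier (subgroup_generated G {z, y}) \<subseteq> carrier ?K"
      using zK xyK by (intro subgroup_generated_minimal subgroup_subgroup_generated) auto
    hence "cyclic_group (subgroup_generated G {z, y})"
      using cyc_sub[OF fin gG] eqK2 by auto
    thus "y \<in> I_C G z" using yG unfolding I_C_def by auto
  qed
  have finz: "finite (I_C G z)" using fin unfolding I_C_def by auto
  have ge: "?f x \<le> ?f z" using card_mono[OF finz sub] .
  have le: "?f z \<le> n_G G"
    unfolding n_G_def using fin zG z1 by (intro Max_ge) auto
  show ?thesis using ge le xmax oz zG by (intro bexI[of _ z]) auto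
qed


theorem lemma2p1:
  fixes G :: "('a, 'b) monoid_scheme" and p :: nat
  assumes "group G" and "Factorial_Ring.prime p" and "finite (carrier G)"
    and "\<exists>k. order G = p ^ k"
    and "carrier G \<noteq> {\<one>\<^bsub>G\<^esub>}"
  shows "\<exists>z \<in> carrier G. group.ord G z = p \<and> card (I_C G z) = n_G G"
  using group.main_aux[OF assms] .

end
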